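(* Let $A,B$ be real constants and let $(x_n)_{n\ge 0}$ be a solution of $$x_{n+10}=\frac{x_n}{A+B\,x_nx_{n+2}x_{n+4}x_{n+6}x_{n+8}},\qquad n\ge 0,$$ with initial values $x_0,\dots,x_9$, such that all terms are well-defined and nonzero. For $k\in\{0,\dots,9\}$ let $P_k=x_{\tau(k)}x_{\tau(k)+2}x_{\tau(k)+4}x_{\tau(k)+6}x_{\tau(k)+8}$ and for $s\ge 0$ let $m_s=5s+\lfloor k/2\rfloor$. Then for all $k\in\{0,\dots,9\}$ and $n\ge 0$: if $A=1$, $$x_{10n+k}=x_k\prod_{s=0}^{n-1}\frac{1+B\,m_s\,P_k}{1+B\,(m_s+1)\,P_k};$$ if $A\neq 1$, $$x_{10n+k}=x_k\prod_{s=0}^{n-1}\frac{A^{m_s}+\frac{B(1-A^{m_s})}{1-A}P_k}{A^{m_s+1}+\frac{B(1-A^{m_s+1})}{1-A}P_k}.$$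
   Context: $\tau(k)\in\{0,1\}$ denotes the remainder of $k$ upon division by $2$ and $\lfloor\cdot\rfloor$ is the floor function. An empty product equals $1$. *)

theory Defs
  imports Complex_Main
begin

definition tau :: "nat \<Rightarrow> nat" where "tau k = k mod 2"

end

theory Submission
  imports Defs
begin

lemma frac_aux:
  fixes P a b c d :: real
  assumes "P \<noteq> 0"
  shows "(a/P + b)/(c/P + d) = (a + b*P)/(c + d*P)"
proof -
  have "a/P + b = (a + b*P)/P" "c/P + d = (c + d*P)/P" using assms by (auto simp: field_simps)
  thus ?thesis using assms by simp
qed

theorem mainTheorem2:
  fixes A B :: real and x :: "nat \<Rightarrow> real"
  assumes wd: "\<And>n. A + B * x n * x (n+2) * x (n+4) * x (n+6) * x (n+8) \<noteq> 0"
    and rec: "\<And>n. x (n+10) = x n / (A + B * x n * x (n+2) * x (n+4) * x (n+6) * x (n+8))"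
    and nz: "\<And>n. x n \<noteq> 0"
  shows "\<forall>k\<in>{0..9}. \<forall>n::nat.
    (let P = x (tau k) * x (tau k + 2) * x (tau k + 4) * x (tau k + 6) * x (tau k + 8);
         m = (\<lambda>s::nat. 5 * s + k div 2) in
     (A = 1 \<longrightarrow> x (10*n + k) = x k * (\<Prod>s<n. (1 + B * real (m s) * P) / (1 + B * (real (m s) + 1) * P)))
   \<and> (A \<noteq> 1 \<longrightarrow> x (10*n + k) = x k * (\<Prod>s<n.
        (A ^ m s + B * (1 - A ^ m s) / (1 - A) * P) /
        (A ^ (m s + 1) + B * (1 - A ^ (m s + 1)) / (1 - A) * P))))"
proof -
  define Q where "Q n = x n * x (n+2) * x (n+4) * x (n+6) * x (n+8)" for n
  define z where "z n = 1 / Q n" for n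
  define S where "S m = (\<Sum>i<m. A^i)" for m
  have Qnz: "Q n \<noteq> 0" for n using nz by (simp add: Q_def)
  have wd': "A + B * Q n \<noteq> 0" for n using wd[of n] by (simp add: Q_def mult.assoc)
  have rec': "x (n+10) = x n / (A + B * Q n)" for n using rec[of n] by (simp add: Q_def mult.assoc)
  have Qs: "Q (n+2) = Q n / (A + B * Q n)" for n
  proof -
    have ee: "n+2+2 = n+4" "n+2+4 = n+6" "n+2+6 = n+8" "n+2+8 = n+10" by simp_all
    have "Q (n+2) = x (n+2) * x (n+2+2) * x (n+2+4) * x (n+2+6) * x (n+2+8)"
      by (simp only: Q_def)
    also have "\<dots> = x (n+2) * x (n+4) * x (n+6) * x (n+8) * x (n+10)"
      by (simp only: ee)
    also have "\<dots> = Q n / (A + B * Q n)" unfolding rec' by (simp add: Q_def field_simps)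
    finally show ?thesis .
  qed
  have zs: "z (n+2) = A * z n + B" for n
    using Qnz[of n] wd'[of n] unfolding z_def Qs by (simp add: field_simps)
  have zj: "z (t + 2*j) = A^j * z t + B * S j" for t j
  proof (induction j)
    case 0 then show ?case by (simp add: S_def)
  next
    case (Suc j)
    have "z (t + 2 * Suc j) = z ((t + 2*j) + 2)" by (simp add: algebra_simps)
    also have "\<dots> = A * (A^j * z t + B * S j) + B" by (simp only: zs Suc)
    also have "\<dots> = A^Suc j * z t + B * S (Suc j)"
      by (simp add: S_def sum_distrib_left algebra_simps lessThan_Suc_eq_insert_0 sum.reindex power_Suc)
    finally show ?case .
  qed
  have xs: "x (n+10) = x n * (z n / z (n+2))" for n
    using Qnz[of n] wd'[of n] unfolding z_def Qs rec' by (simp add: field_simps)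
  have xn: "x (10*n + k) = x k * (\<Prod>s<n. z (10*s+k) / z (10*s+k+2))" for n k
  proof (induction n)
    case 0 then show ?case by simp
  next
    case (Suc n)
    have "x (10 * Suc n + k) = x ((10*n+k) + 10)" by (simp add: algebra_simps)
    also have "\<dots> = x (10*n+k) * (z (10*n+k) / z (10*n+k+2))" by (rule xs)
    finally show ?case by (simp add: Suc)
  qed
  show ?thesis
  proof (intro ballI allI)
    fix k n :: nat
    define P where "P = x (tau k) * x (tau k + 2) * x (tau k + 4) * x (tau k + 6) * x (tau k + 8)"
    define m where "m = (\<lambda>s::nat. 5 * s + k div 2)"
    have PQ: "P = Q (tau k)" by (simp add: P_def Q_def)
    have Pnz: "P \<noteq> 0" using Qnz PQ by simp
    have fac: "z (10*s+k) / z (10*s+k+2) = (A^m s + B * S (m s) * P) / (A^(m s + 1) + B * S (m s + 1) * P)" for s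
    proof -
      have e1: "10*s+k = tau k + 2 * m s" by (simp add: m_def tau_def)
      have e2: "10*s+k+2 = tau k + 2 * (m s + 1)" by (simp add: m_def tau_def)
      have "z (10*s+k) / z (10*s+k+2) = (A^m s / P + B * S (m s)) / (A^(m s+1) / P + B * S (m s + 1))"
        using zj[of "tau k" "m s"] zj[of "tau k" "m s + 1"] e1 e2 by (simp add: z_def PQ)
      then show ?thesis by (simp add: frac_aux[OF Pnz])
    qed
    have main: "x (10*n + k) = x k * (\<Prod>s<n. (A^m s + B * S (m s) * P) / (A^(m s + 1) + B * S (m s + 1) * P))"
      unfolding xn fac ..
    have S1: "A = 1 \<Longrightarrow> S j = real j" for j by (simp add: S_def)
    have S2: "A \<noteq> 1 \<Longrightarrow> S j = (1 - A^j)/(1-A)" for j by (simp add: S_def sum_gp_strict)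
    show "let P = x (tau k) * x (tau k + 2) * x (tau k + 4) * x (tau k + 6) * x (tau k + 8);
         m = (\<lambda>s::nat. 5 * s + k div 2) in
     (A = 1 \<longrightarrow> x (10*n + k) = x k * (\<Prod>s<n. (1 + B * real (m s) * P) / (1 + B * (real (m s) + 1) * P)))
   \<and> (A \<noteq> 1 \<longrightarrow> x (10*n + k) = x k * (\<Prod>s<n.
        (A ^ m s + B * (1 - A ^ m s) / (1 - A) * P) /
        (A ^ (m s + 1) + B * (1 - A ^ (m s + 1)) / (1 - A) * P)))"
      unfolding Let_def P_def[symmetric] m_def[symmetric]
      using main S1 S2 by (auto simp: add.commute)
  qed
qed

end
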